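(* Let $F$ be a field of characteristic $p>0$, $L$ a Lie algebra over $F$ and $A$ an associative enveloping algebra of $L$ (so $L\subseteq A^{(-)}$). Put $\tilde L=L\otimes_FE\subseteq\tilde A=A\otimes_FE$. If $a\in\tilde L$ is a sandwich of $\tilde L$, then $[a,b]^p=0$ in $\tilde A$ for every $b\in\tilde L$.
   Context: $A^{(-)}$ is $A$ with the commutator bracket $[x,y]=xy-yx$. $E$ is the commutative associative $F$-algebra without unit generated by $e_1,e_2,\dots$ with relations $e_i^2=0$; $\tilde A=A\otimes_FE$ and $\tilde L=L\otimes_FE$. An element $a$ of a Lie algebra $M$ is a sandwich if $\operatorname{ad}(a)^2=0$ and $\operatorname{ad}(a)\operatorname{ad}(c)\operatorname{ad}(a)=0$ for all $c\in M$, where $\operatorname{ad}(a):x\mapsto[x,a]$. *)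

theory Defs
  imports Complex_Main
begin

text \<open>The algebra E (commutative, associative, non-unital, generated by e_1, e_2, ...
  with e_i^2 = 0) has the F-basis e_S = prod of e_i over i in S, for S a finite nonempty set of
  indices, with e_S e_T = e_(S union T) if S, T are disjoint and 0 otherwise.
  Hence an element of a tensor product V (x)_F E is the same as a finitely supported
  function from finite nonempty index sets to V.\<close>

definition tensE :: "'a set \<Rightarrow> (nat set \<Rightarrow> 'a::zero) set" where
  "tensE V = {x. finite {S. x S \<noteq> 0} \<and> (\<forall>S. x S \<noteq> 0 \<longrightarrow> finite S \<and> S \<noteq> {})
                 \<and> (\<forall>S. x S \<in> V)}"

definition tmul :: "(nat set \<Rightarrow> 'a::semiring_0) \<Rightarrow> (nat set \<Rightarrow> 'a) \<Rightarrow> nat set \<Rightarrow> 'a" where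
  "tmul x y = (\<lambda>U. \<Sum>S\<in>Pow U. x S * y (U - S))"

definition tbr :: "(nat set \<Rightarrow> 'a::ring) \<Rightarrow> (nat set \<Rightarrow> 'a) \<Rightarrow> nat set \<Rightarrow> 'a" where
  "tbr x y = tmul x y - tmul y x"

text \<open>Positive powers x^n (n >= 1) in the (possibly non-unital) algebra A (x)_F E.\<close>
fun tpow :: "(nat set \<Rightarrow> 'a::semiring_0) \<Rightarrow> nat \<Rightarrow> nat set \<Rightarrow> 'a" where
  "tpow x 0 = (\<lambda>_. 0)"
| "tpow x (Suc 0) = x"
| "tpow x (Suc (Suc n)) = tmul (tpow x (Suc n)) x"

definition tsandwich :: "(nat set \<Rightarrow> 'a::ring) set \<Rightarrow> (nat set \<Rightarrow> 'a) \<Rightarrow> bool" where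
  "tsandwich M a \<longleftrightarrow>
     (\<forall>x\<in>M. tbr (tbr x a) a = (\<lambda>_. 0)) \<and>
     (\<forall>x\<in>M. \<forall>c\<in>M. tbr (tbr (tbr x a) c) a = (\<lambda>_. 0))"

inductive_set alg_gen :: "('f \<Rightarrow> 'a \<Rightarrow> 'a) \<Rightarrow> 'a::ring set \<Rightarrow> 'a set"
  for smult :: "'f \<Rightarrow> 'a \<Rightarrow> 'a" and X :: "'a set" where
  gen: "x \<in> X \<Longrightarrow> x \<in> alg_gen smult X"
| zero: "0 \<in> alg_gen smult X"
| add: "x \<in> alg_gen smult X \<Longrightarrow> y \<in> alg_gen smult X \<Longrightarrow> x + y \<in> alg_gen smult X"
| scale: "x \<in> alg_gen smult X \<Longrightarrow> smult c x \<in> alg_gen smult X"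
| mult: "x \<in> alg_gen smult X \<Longrightarrow> y \<in> alg_gen smult X \<Longrightarrow> x * y \<in> alg_gen smult X"

end

theory Submission
  imports Defs
begin

lemma tmul_assoc:
  fixes x y z :: "nat set \<Rightarrow> 'a::semiring_0"
  shows "tmul (tmul x y) z = tmul x (tmul y z)"
proof
  fix U :: "nat set"
  show "tmul (tmul x y) z U = tmul x (tmul y z) U"
  proof (cases "finite U")
    case False
    then show ?thesis by (simp add: tmul_def)
  next
    case True
    have fS: "\<And>S. S \<subseteq> U \<Longrightarrow> finite S" using True finite_subset by blast
    have "tmul (tmul x y) z U = (\<Sum>S\<in>Pow U. \<Sum>R\<in>Pow S. x R * y (S - R) * z (U - S))"
      by (simp add: tmul_def sum_distrib_right)
    also have "\<dots> = (\<Sum>(S,R)\<in>Sigma (Pow U) Pow. x R * y (S - R) * z (U - S))"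
      using True fS by (subst sum.Sigma) auto
    also have "\<dots> = (\<Sum>(R,Q)\<in>Sigma (Pow U) (\<lambda>R. Pow (U - R)). x R * (y Q * z (U - R - Q)))"
      apply (rule sum.reindex_bij_witness[where i="\<lambda>(R,Q). (R \<union> Q, R)" and j="\<lambda>(S,R). (R, S - R)"])
      subgoal by (clarsimp, blast)
      subgoal by (clarsimp, blast)
      subgoal by (clarsimp, blast)
      subgoal by (clarsimp, blast)
      subgoal for w
      proof (cases w)
        case (Pair S R)
        assume "w \<in> Sigma (Pow U) Pow"
        then have "R \<subseteq> S" "S \<subseteq> U" using Pair by auto
        then have "U - R - (S - R) = U - S" by blast
        then show ?thesis using Pair by (simp add: mult.assoc)
      qed
      done
    also have "\<dots> = (\<Sum>R\<in>Pow U. \<Sum>Q\<in>Pow (U - R). x R * (y Q * z (U - R - Q)))"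
      using True by (subst sum.Sigma) auto
    also have "\<dots> = tmul x (tmul y z) U"
      by (simp add: tmul_def sum_distrib_left)
    finally show ?thesis .
  qed
qed

typedef 'a tn = "UNIV :: (nat set \<Rightarrow> 'a) set" by simp
setup_lifting type_definition_tn

instantiation tn :: (ring) ring
begin
lift_definition zero_tn :: "'a tn" is "\<lambda>_. 0" .
lift_definition plus_tn :: "'a tn \<Rightarrow> 'a tn \<Rightarrow> 'a tn" is "\<lambda>x y U. x U + y U" .
lift_definition minus_tn :: "'a tn \<Rightarrow> 'a tn \<Rightarrow> 'a tn" is "\<lambda>x y U. x U - y U" .
lift_definition uminus_tn :: "'a tn \<Rightarrow> 'a tn" is "\<lambda>x U. - x U" .
lift_definition times_tn :: "'a tn \<Rightarrow> 'a tn \<Rightarrow> 'a tn" is tmul .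
instance
proof
  fix a b c :: "'a tn"
  show "a + b + c = a + (b + c)" by transfer (simp add: add.assoc)
  show "a + b = b + a" by transfer (simp add: add.commute)
  show "0 + a = a" by transfer simp
  show "- a + a = 0" by transfer simp
  show "a - b = a + - b" by transfer simp
  show "a * b * c = a * (b * c)" by transfer (rule tmul_assoc)
  show "(a + b) * c = a * c + b * c"
    by transfer (simp add: tmul_def fun_eq_iff distrib_right sum.distrib)
  show "a * (b + c) = a * b + a * c"
    by transfer (simp add: tmul_def fun_eq_iff distrib_left sum.distrib)
qed
end

fun nm :: "nat \<Rightarrow> 'b::monoid_add \<Rightarrow> 'b" where
  "nm 0 y = 0"
| "nm (Suc n) y = y + nm n y"

fun pw :: "'b::ring \<Rightarrow> nat \<Rightarrow> 'b" where
  "pw x 0 = 0"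
| "pw x (Suc 0) = x"
| "pw x (Suc (Suc n)) = pw x (Suc n) * x"

fun qq :: "'b::ring \<Rightarrow> 'b \<Rightarrow> nat \<Rightarrow> 'b" where
  "qq s v 0 = v"
| "qq s v (Suc n) = pw s (Suc n) * v"

lemma nm_mult: "nm n (y::'b::ring) * z = nm n (y * z)"
  by (induction n) (auto simp: distrib_right)

lemma nm_add: "nm n (y::'b::ring) + y = nm (Suc n) y"
  by (induction n) (auto simp: add.assoc add.commute)

lemma nm_zero: "nm n (0::'b::ring) = 0"
  by (induction n) auto

lemma pw_zero: "pw (0::'b::ring) n = 0"
  by (induction "0::'b" n rule: pw.induct) auto

lemma pw_comm: "s * v = v * (s::'b::ring) \<Longrightarrow> pw s n * v = v * pw s n"
proof (induction s n rule: pw.induct)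
  case (3 x n)
  then have "pw x (Suc n) * x * v = v * (pw x (Suc n) * x)"
    by (metis mult.assoc)
  then show ?case by (simp add: mult.assoc)
qed auto

lemma binom:
  fixes s v :: "'b::ring"
  assumes c: "s * v = v * s" and z: "v * v = 0"
  shows "pw (s + v) (Suc n) = pw s (Suc n) + nm (Suc n) (qq s v n)"
proof (induction n)
  case 0
  then show ?case by simp
next
  case (Suc n)
  have q1: "qq s v n * s = qq s v (Suc n)"
  proof (cases n)
    case 0 then show ?thesis using c by simp
  next
    case (Suc m)
    have "pw s (Suc m) * v * s = pw s (Suc m) * s * v" using c by (simp add: mult.assoc)
    then show ?thesis using Suc by simp
  qed
  have q2: "qq s v n * v = 0"
    by (cases n) (auto simp: z mult.assoc)
  have "pw (s + v) (Suc (Suc n)) = (pw s (Suc n) + nm (Suc n) (qq s v n)) * (s + v)"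
    using Suc by simp
  also have "\<dots> = pw s (Suc n) * s + pw s (Suc n) * v + nm (Suc n) (qq s v n * s) + nm (Suc n) (qq s v n * v)"
    by (simp add: distrib_left distrib_right nm_mult add.assoc add.left_commute)
  also have "\<dots> = pw s (Suc (Suc n)) + qq s v (Suc n) + nm (Suc n) (qq s v (Suc n))"
    using q1 q2 by (simp add: nm_zero)
  also have "\<dots> = pw s (Suc (Suc n)) + nm (Suc (Suc n)) (qq s v (Suc n))"
    by (simp add: add.assoc)
  finally show ?case .
qed

lemma frob_sum:
  fixes v :: "'c \<Rightarrow> 'b::ring"
  assumes ch: "\<And>x::'b. nm p x = 0" and p: "p > 0" and fin: "finite F"
    and comm: "\<And>S T. S \<in> F \<Longrightarrow> T \<in> F \<Longrightarrow> v S * v T = v T * v S"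
    and sq: "\<And>T. T \<in> F \<Longrightarrow> v T * v T = 0"
  shows "pw (sum v F) p = 0"
  using fin comm sq
proof (induction F rule: finite_induct)
  case empty
  then show ?case by (simp add: pw_zero)
next
  case (insert T F)
  obtain n where pn: "p = Suc n" using p by (cases p) auto
  have c: "sum v F * v T = v T * sum v F"
    using insert.prems(1) by (auto simp add: sum_distrib_left sum_distrib_right intro!: sum.cong)
  have "pw (sum v (insert T F)) p = pw (sum v F + v T) (Suc n)"
    using insert pn by (simp add: add.commute)
  also have "\<dots> = pw (sum v F) p + nm p (qq (sum v F) (v T) n)"
    using binom[OF c insert.prems(2)] pn by simp
  also have "\<dots> = 0"
  proof -
    have "pw (sum v F) p = 0" using insert by simp
    moreover have "nm p (qq (sum v F) (v T) n) = 0" by (rule ch)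
    ultimately show ?thesis by simp
  qed
  finally show ?case .
qed


lemma tmul_rep: "Rep_tn (X * Y) = tmul (Rep_tn X) (Rep_tn Y)"
  by (simp add: times_tn.rep_eq)

lemma tbr_rep: "tbr x y = Rep_tn (Abs_tn x * Abs_tn y - Abs_tn y * Abs_tn x)"
  by (simp add: times_tn.rep_eq minus_tn.rep_eq Abs_tn_inverse tbr_def fun_eq_iff)

lemma zero_rep: "(\<lambda>_. 0) = Rep_tn 0"
  by (simp add: zero_tn.rep_eq)

lemma tpow_rep: "tpow x n = Rep_tn (pw (Abs_tn x) n)"
  by (induction x n rule: tpow.induct)
     (auto simp: zero_tn.rep_eq Abs_tn_inverse times_tn.rep_eq)

lemma nm_rep: "Rep_tn (nm n X) = (\<lambda>U. nm n (Rep_tn X U))"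
  by (induction n) (auto simp: zero_tn.rep_eq plus_tn.rep_eq)

lemma sum_rep: "finite F \<Longrightarrow> Rep_tn (sum f F) = (\<lambda>U. \<Sum>T\<in>F. Rep_tn (f T) U)"
  by (induction F rule: finite_induct) (auto simp: zero_tn.rep_eq plus_tn.rep_eq)

lemma supp_mul_zero:
  fixes x y :: "nat set \<Rightarrow> 'a::semiring_0"
  assumes "T \<noteq> {}" "\<And>S. x S \<noteq> 0 \<Longrightarrow> T \<subseteq> S" "\<And>S. y S \<noteq> 0 \<Longrightarrow> T \<subseteq> S"
  shows "tmul x y = (\<lambda>_. 0)"
proof
  fix U
  have "\<And>S. S \<in> Pow U \<Longrightarrow> x S * y (U - S) = 0"
  proof -
    fix S assume "S \<in> Pow U"
    show "x S * y (U - S) = 0"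
    proof (rule ccontr)
      assume "x S * y (U - S) \<noteq> 0"
      then have "x S \<noteq> 0" "y (U - S) \<noteq> 0" by auto
      then have "T \<subseteq> S" "T \<subseteq> U - S" using assms by auto
      then show False using assms(1) by blast
    qed
  qed
  then show "tmul x y U = 0" by (simp add: tmul_def)
qed

lemma supp_tmul_r:
  fixes x y :: "nat set \<Rightarrow> 'a::semiring_0"
  assumes "\<And>S. y S \<noteq> 0 \<Longrightarrow> T \<subseteq> S" "tmul x y S \<noteq> 0"
  shows "T \<subseteq> S"
proof -
  from assms(2) obtain R where "R \<in> Pow S" "x R * y (S - R) \<noteq> 0"
    unfolding tmul_def by (meson sum.not_neutral_contains_not_neutral)
  then have "y (S - R) \<noteq> 0" by auto
  then show ?thesis using assms(1) by blast
qed

lemma supp_tmul_l: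
  fixes x y :: "nat set \<Rightarrow> 'a::semiring_0"
  assumes "\<And>S. x S \<noteq> 0 \<Longrightarrow> T \<subseteq> S" "tmul x y S \<noteq> 0"
  shows "T \<subseteq> S"
proof -
  from assms(2) obtain R where "R \<in> Pow S" "x R * y (S - R) \<noteq> 0"
    unfolding tmul_def by (meson sum.not_neutral_contains_not_neutral)
  then have "x R \<noteq> 0" by auto
  then have "T \<subseteq> R" using assms(1) by blast
  then show ?thesis using \<open>R \<in> Pow S\<close> by blast
qed

lemma comm_ident:
  fixes u y a :: "'b::ring"
  shows "u * (y * a - a * y) - (y * a - a * y) * u
     = ((u * y - y * u) * a - a * (u * y - y * u)) - ((u * a - a * u) * y - y * (u * a - a * u))"
  by (simp add: algebra_simps)

theorem lemma22:
  fixes smult :: "'f::field \<Rightarrow> 'a::ring \<Rightarrow> 'a"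
    and p :: nat
    and L :: "'a set"
    and a :: "nat set \<Rightarrow> 'a"
  assumes char: "CHAR('f) = p" and p_pos: "p > 0"
    and vs: "module smult"
    and bilin: "\<And>c x y. smult c (x * y) = smult c x * y"
               "\<And>c x y. smult c (x * y) = x * smult c y"
    and L_sub: "module.subspace smult L"
    and L_lie: "\<And>x y. x \<in> L \<Longrightarrow> y \<in> L \<Longrightarrow> x * y - y * x \<in> L"
    and env: "alg_gen smult L = UNIV"
    and a_in: "a \<in> tensE L"
    and sw: "tsandwich (tensE L) a"
  shows "\<forall>b \<in> tensE L. tpow (tbr a b) p = (\<lambda>_. 0)"
proof
  fix b assume b: "b \<in> tensE L"
  define A where "A = Abs_tn a"
  have nm_sm: "nm n y = smult (of_nat n) y" for n and y :: 'a
    by (induction n) (simp_all add: module.scale_left_distrib[OF vs] module.scale_one[OF vs]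
        module.scale_zero_left[OF vs])
  have nmA: "nm p y = 0" for y :: 'a
  proof -
    have "(of_nat p :: 'f) = 0" using of_nat_CHAR[where 'a='f] char by simp
    then show ?thesis by (simp add: nm_sm module.scale_zero_left[OF vs])
  qed
  have nmR: "nm p X = 0" for X :: "'a tn"
  proof -
    have "Rep_tn (nm p X) = Rep_tn 0" by (simp add: nm_rep nmA zero_tn.rep_eq)
    then show ?thesis by (simp only: Rep_tn_inject)
  qed
  have sw1: "(Abs_tn x * A - A * Abs_tn x) * A - A * (Abs_tn x * A - A * Abs_tn x) = 0"
    if "x \<in> tensE L" for x
  proof -
    have "tbr (tbr x a) a = (\<lambda>_. 0)" using conjunct1[OF sw[unfolded tsandwich_def]] that by (rule bspec)
    then show ?thesis unfolding tbr_rep zero_rep A_def Rep_tn_inverse Rep_tn_inject .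
  qed
  have sw2: "((Abs_tn x * A - A * Abs_tn x) * Abs_tn y - Abs_tn y * (Abs_tn x * A - A * Abs_tn x)) * A
        - A * ((Abs_tn x * A - A * Abs_tn x) * Abs_tn y - Abs_tn y * (Abs_tn x * A - A * Abs_tn x)) = 0"
    if "x \<in> tensE L" "y \<in> tensE L" for x y
  proof -
    have "tbr (tbr (tbr x a) y) a = (\<lambda>_. 0)"
      using bspec[OF bspec[OF conjunct2[OF sw[unfolded tsandwich_def]] that(1)] that(2)] .
    then show ?thesis unfolding tbr_rep zero_rep A_def Rep_tn_inverse Rep_tn_inject .
  qed
  have comm: "(Abs_tn x * A - A * Abs_tn x) * (Abs_tn y * A - A * Abs_tn y)
     = (Abs_tn y * A - A * Abs_tn y) * (Abs_tn x * A - A * Abs_tn x)"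
    if "x \<in> tensE L" "y \<in> tensE L" for x y
    using comm_ident[of "Abs_tn x * A - A * Abs_tn x" "Abs_tn y" A] sw1[OF that(1)] sw2[OF that]
    by simp
  define F where "F = {T. b T \<noteq> 0}"
  have finF: "finite F" and Fne: "\<And>T. T \<in> F \<Longrightarrow> T \<noteq> {}" and bL: "\<And>T. b T \<in> L"
    using b unfolding F_def tensE_def by auto
  have zL: "0 \<in> L" using module.subspace_0[OF vs L_sub] .
  define bT where "bT T = (\<lambda>S. if S = T then b T else (0::'a))" for T
  have bTL: "bT T \<in> tensE L" if "T \<in> F" for T
    using that b zL unfolding tensE_def bT_def F_def by auto
  have decomp: "Abs_tn b = (\<Sum>T\<in>F. Abs_tn (bT T))"
  proof -
    have "Rep_tn (\<Sum>T\<in>F. Abs_tn (bT T)) = b"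
    proof
      fix U
      have "(\<Sum>T\<in>F. bT T U) = (if U \<in> F then b U else 0)"
        unfolding bT_def using finF by (simp add: sum.delta' eq_commute[of U])
      moreover have "Rep_tn (\<Sum>T\<in>F. Abs_tn (bT T)) U = (\<Sum>T\<in>F. bT T U)"
        by (simp add: sum_rep[OF finF] Abs_tn_inverse)
      moreover have "(if U \<in> F then b U else 0) = b U" by (simp add: F_def)
      ultimately show "Rep_tn (\<Sum>T\<in>F. Abs_tn (bT T)) U = b U" by simp
    qed
    then have "Abs_tn (Rep_tn (\<Sum>T\<in>F. Abs_tn (bT T))) = Abs_tn b" by simp
    then show ?thesis by (simp only: Rep_tn_inverse)
  qed
  define v where "v T = A * Abs_tn (bT T) - Abs_tn (bT T) * A" for T
  have vsum: "Abs_tn (tbr a b) = sum v F"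
    unfolding tbr_rep Rep_tn_inverse decomp v_def A_def
    by (simp add: sum_distrib_left sum_distrib_right sum_subtractf)
  have vcomm: "v S * v T = v T * v S" if "S \<in> F" "T \<in> F" for S T
  proof -
    have e: "v S = - (Abs_tn (bT S) * A - A * Abs_tn (bT S))" "v T = - (Abs_tn (bT T) * A - A * Abs_tn (bT T))"
      unfolding v_def by simp_all
    show ?thesis unfolding e minus_mult_minus by (rule comm[OF bTL[OF that(1)] bTL[OF that(2)]])
  qed
  have vsq: "v T * v T = 0" if "T \<in> F" for T
  proof -
    have supp_b: "\<And>S. bT T S \<noteq> 0 \<Longrightarrow> T \<subseteq> S" unfolding bT_def by (auto split: if_splits)
    have rv: "Rep_tn (v T) = tmul a (bT T) - tmul (bT T) a"
      unfolding v_def A_def by (simp add: minus_tn.rep_eq times_tn.rep_eq Abs_tn_inverse fun_eq_iff)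
    have supp_v: "T \<subseteq> S" if "Rep_tn (v T) S \<noteq> 0" for S
    proof -
      have "tmul a (bT T) S \<noteq> 0 \<or> tmul (bT T) a S \<noteq> 0" using that rv by auto
      then show ?thesis using supp_tmul_r[OF supp_b] supp_tmul_l[OF supp_b] by blast
    qed
    have "Rep_tn (v T * v T) = (\<lambda>_. 0)"
      unfolding tmul_rep by (rule supp_mul_zero[OF Fne[OF that] supp_v supp_v])
    then have "Rep_tn (v T * v T) = Rep_tn 0" by (simp add: zero_tn.rep_eq)
    then show ?thesis by (simp only: Rep_tn_inject)
  qed
  have "pw (sum v F) p = 0"
    by (rule frob_sum[OF nmR p_pos finF vcomm vsq])
  then show "tpow (tbr a b) p = (\<lambda>_. 0)"
    by (simp add: tpow_rep vsum zero_tn.rep_eq)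
qed

end
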